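(* Let $r,k,s$ be integers with $k+r\neq0$, $k+s\neq0$, and let $n\ge0$ be an integer. Then \[ 5F_{k+r}F_{k+s}\;\Big|\;L_{2k+r+s}^{n+1}-(-1)^{(k+s)(n+1)}L_{r-s}^{n+1}. \] In particular, $5F_{k+r}^2\mid L_{2(k+r)}^{n+1}-(-1)^{(k+r)(n+1)}2^{n+1}$.
   Context: $F_n$ and $L_n$ denote the Fibonacci and Lucas numbers, defined for all integers $n$ by $F_0=0,F_1=1$, $L_0=2,L_1=1$ and $x_n=x_{n-1}+x_{n-2}$, with $F_{-n}=(-1)^{n-1}F_n$ and $L_{-n}=(-1)^nL_n$. *)

theory Defs
  imports Main
begin

fun fibn :: "nat \<Rightarrow> int" where
  "fibn 0 = 0" | "fibn (Suc 0) = 1" | "fibn (Suc (Suc n)) = fibn (Suc n) + fibn n"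

fun lucn :: "nat \<Rightarrow> int" where
  "lucn 0 = 2" | "lucn (Suc 0) = 1" | "lucn (Suc (Suc n)) = lucn (Suc n) + lucn n"

definition F :: "int \<Rightarrow> int" where
  "F m = (if m \<ge> 0 then fibn (nat m) else (-1) ^ (nat (-m) + 1) * fibn (nat (-m)))"

definition L :: "int \<Rightarrow> int" where
  "L m = (if m \<ge> 0 then lucn (nat m) else (-1) ^ nat (-m) * lucn (nat (-m)))"

definition negpow :: "int \<Rightarrow> int" where
  "negpow e = (if even e then 1 else -1)"

end

theory Submission
  imports Defs Complex_Main
begin

lemma diff_dvd_pow: "(x::int) - y dvd x ^ m - y ^ m"
proof (induction m)
  case 0 then show ?case by simp
next
  case (Suc m)
  have "x ^ Suc m - y ^ Suc m = x * (x^m - y^m) + (x - y) * y^m" by (simp add: algebra_simps)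
  then show ?case using Suc by (simp add: dvd_add)
qed

lemma natp1[simp]: "nat (int x + 1) = Suc x" by simp
lemma sqrt5sq: "sqrt 5 * sqrt (5::real) = 5" by simp

lemma F_rec: "F (m + 2) = F (m + 1) + F m"
proof -
  consider "m \<ge> 0" | "m = -1" | j where "m = - int j - 2" proof -
    assume h1: "m \<ge> 0 \<Longrightarrow> thesis" and h2: "m = -1 \<Longrightarrow> thesis" and h3: "\<And>j. m = - int j - 2 \<Longrightarrow> thesis"
    show thesis
    proof (cases "m \<ge> 0")
      case True then show ?thesis by (rule h1)
    next
      case False
      show ?thesis
      proof (cases "m = -1")
        case True then show ?thesis by (rule h2)
      next
        case False
        then have "m = - int (nat (- m - 2)) - 2" using \<open>\<not> m \<ge> 0\<close> by simp
        then show ?thesis by (rule h3)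
      qed
    qed
  qed
  then show ?thesis
  proof cases
    case 1
    then obtain j where j: "m = int j" using nonneg_eq_int by blast
    have "nat (int j + 2) = Suc (Suc j)" "nat (int j + 1) = Suc j" by auto
    then show ?thesis using j by (simp add: F_def)
  next
    case 2 then show ?thesis by (simp add: F_def)
  next
    case 3
    have a: "F (m+2) = (-1)^(j+1) * fibn j"
      using 3 by (cases j) (auto simp: F_def)
    have b: "F (m+1) = (-1)^j * fibn (Suc j)"
      using 3 by (auto simp: F_def nat_add_distrib)
    have c: "F m = (-1)^(j+1) * fibn (Suc (Suc j))"
      using 3 by (auto simp: F_def nat_add_distrib)
    show ?thesis using a b c by (simp add: algebra_simps)
  qed
qed

lemma L_rec: "L (m + 2) = L (m + 1) + L m"
proof -
  consider "m \<ge> 0" | "m = -1" | j where "m = - int j - 2" proof -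
    assume h1: "m \<ge> 0 \<Longrightarrow> thesis" and h2: "m = -1 \<Longrightarrow> thesis" and h3: "\<And>j. m = - int j - 2 \<Longrightarrow> thesis"
    show thesis
    proof (cases "m \<ge> 0")
      case True then show ?thesis by (rule h1)
    next
      case False
      show ?thesis
      proof (cases "m = -1")
        case True then show ?thesis by (rule h2)
      next
        case False
        then have "m = - int (nat (- m - 2)) - 2" using \<open>\<not> m \<ge> 0\<close> by simp
        then show ?thesis by (rule h3)
      qed
    qed
  qed
  then show ?thesis
  proof cases
    case 1
    then obtain j where j: "m = int j" using nonneg_eq_int by blast
    have "nat (int j + 2) = Suc (Suc j)" "nat (int j + 1) = Suc j" by auto
    then show ?thesis using j by (simp add: L_def)
  next
    case 2 then show ?thesis by (simp add: L_def)
  next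
    case 3
    have a: "L (m+2) = (-1)^j * lucn j"
      using 3 by (cases j) (auto simp: L_def)
    have b: "L (m+1) = (-1)^(j+1) * lucn (Suc j)"
      using 3 by (auto simp: L_def nat_add_distrib)
    have c: "L m = (-1)^j * lucn (Suc (Suc j))"
      using 3 by (auto simp: L_def nat_add_distrib)
    show ?thesis using a b c by (simp add: algebra_simps)
  qed
qed

lemma rec_unique:
  fixes f g :: "int \<Rightarrow> real"
  assumes f: "\<And>m. f (m+2) = f (m+1) + f m" and g: "\<And>m. g (m+2) = g (m+1) + g m"
    and "f 0 = g 0" "f 1 = g 1"
  shows "f m = g m"
proof -
  have pos: "f (int n) = g (int n) \<and> f (int n + 1) = g (int n + 1)" for n
  proof (induction n)
    case 0 then show ?case using assms by simp
  next
    case (Suc n)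
    have "f (int n + 2) = g (int n + 2)" using f[of "int n"] g[of "int n"] Suc by simp
    moreover have "int (Suc n) = int n + 1" "int (Suc n) + 1 = int n + 2" by simp_all
    ultimately show ?case using Suc by presburger
  qed
  have neg: "f (- int n) = g (- int n) \<and> f (- int n + 1) = g (- int n + 1)" for n
  proof (induction n)
    case 0 then show ?case using assms by simp
  next
    case (Suc n)
    have "f (- int n - 1) = g (- int n - 1)"
      using f[of "- int n - 1"] g[of "- int n - 1"] Suc by (simp add: algebra_simps)
    moreover have "- int (Suc n) = - int n - 1" "- int (Suc n) + 1 = - int n" by simp_all
    ultimately show ?case using Suc by presburger
  qed
  show ?thesis
  proof (cases "m \<ge> 0")
    case True then show ?thesis using pos[of "nat m"] by simp
  next
    case False then show ?thesis using neg[of "nat (-m)"] by simp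
  qed
qed

definition phi :: real where "phi = (1 + sqrt 5) / 2"
definition psi :: real where "psi = (1 - sqrt 5) / 2"

lemma phi_sq: "phi^2 = phi + 1" by (simp add: phi_def power2_eq_square field_simps sqrt5sq)
lemma psi_sq: "psi^2 = psi + 1" by (simp add: psi_def power2_eq_square field_simps sqrt5sq)
lemma phi_nz: "phi \<noteq> 0" using phi_sq by auto
lemma psi_nz: "psi \<noteq> 0" using psi_sq by auto
lemma phipsi: "phi * psi = -1" by (simp add: phi_def psi_def field_simps sqrt5sq)
lemma phi_minus_psi: "phi - psi = sqrt 5" by (simp add: phi_def psi_def field_simps)

lemma powi_rec: assumes "(x::real)^2 = x + 1" shows "x powi (m+2) = x powi (m+1) + x powi m"
proof -
  have nz: "x \<noteq> 0" using assms by auto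
  have "x powi (m+2) = x powi m * x^2" using nz by (simp add: power_int_add)
  moreover have "x powi (m+1) = x powi m * x" using nz by (simp add: power_int_add)
  ultimately show ?thesis using assms by (simp add: algebra_simps)
qed

lemma binetF: "real_of_int (F m) * sqrt 5 = phi powi m - psi powi m"
proof (rule rec_unique[where f = "\<lambda>m. real_of_int (F m) * sqrt 5" and g = "\<lambda>m. phi powi m - psi powi m"])
  show "real_of_int (F (m + 2)) * sqrt 5 = real_of_int (F (m + 1)) * sqrt 5 + real_of_int (F m) * sqrt 5" for m
    by (simp add: F_rec algebra_simps)
  show "phi powi (m + 2) - psi powi (m + 2) = (phi powi (m + 1) - psi powi (m + 1)) + (phi powi m - psi powi m)" for m
    using powi_rec[OF phi_sq] powi_rec[OF psi_sq] by simp
  show "real_of_int (F 0) * sqrt 5 = phi powi 0 - psi powi 0" by (simp add: F_def)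
  show "real_of_int (F 1) * sqrt 5 = phi powi 1 - psi powi 1" by (simp add: F_def phi_minus_psi)
qed

lemma binetL: "real_of_int (L m) = phi powi m + psi powi m"
proof (rule rec_unique[where f = "\<lambda>m. real_of_int (L m)" and g = "\<lambda>m. phi powi m + psi powi m"])
  show "real_of_int (L (m + 2)) = real_of_int (L (m + 1)) + real_of_int (L m)" for m
    by (simp add: L_rec)
  show "phi powi (m + 2) + psi powi (m + 2) = (phi powi (m + 1) + psi powi (m + 1)) + (phi powi m + psi powi m)" for m
    using powi_rec[OF phi_sq] powi_rec[OF psi_sq] by simp
  show "real_of_int (L 0) = phi powi 0 + psi powi 0" by (simp add: L_def)
  show "real_of_int (L 1) = phi powi 1 + psi powi 1" by (simp add: L_def phi_def psi_def field_simps)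
qed

lemma negpow_real: "real_of_int (negpow b) = (-1::real) powi b"
  by (cases "even b") (auto simp: negpow_def)

lemma key: "L (a + b) - negpow b * L (a - b) = 5 * F a * F b"
proof -
  define A where "A = phi powi a"
  define B where "B = phi powi b"
  define C where "C = psi powi a"
  define D where "D = psi powi b"
  have 1: "phi powi (a+b) = A * B" unfolding A_def B_def by (simp add: power_int_add phi_nz)
  have 2: "psi powi (a+b) = C * D" unfolding C_def D_def by (simp add: power_int_add psi_nz)
  have 3: "phi powi (a-b) * B = A" unfolding A_def B_def
    by (simp add: power_int_add[symmetric] phi_nz)
  have 4: "psi powi (a-b) * D = C" unfolding C_def D_def
    by (simp add: power_int_add[symmetric] psi_nz)
  have 5: "(-1::real) powi b = B * D" unfolding B_def D_def
    by (simp add: power_int_mult_distrib[symmetric] phipsi)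
  have "real_of_int (L (a + b) - negpow b * L (a - b))
      = A*B + C*D - B * D * (phi powi (a-b) + psi powi (a-b))"
    by (simp add: binetL negpow_real 1 2 5)
  also have "\<dots> = A*B + C*D - D * (phi powi (a-b) * B) - B * (psi powi (a-b) * D)"
    by (simp add: algebra_simps)
  also have "\<dots> = (A - C) * (B - D)" unfolding 3 4 by (simp add: algebra_simps)
  also have "\<dots> = (real_of_int (F a) * sqrt 5) * (real_of_int (F b) * sqrt 5)"
    by (simp add: binetF A_def B_def C_def D_def)
  also have "\<dots> = real_of_int (5 * F a * F b)" by (simp add: algebra_simps)
  finally show ?thesis by linarith
qed

lemma negpow_mult: "negpow (b * int m) = negpow b ^ m"
  by (cases "even b") (auto simp: negpow_def even_mult_iff)

lemma main_dvd: "5 * F a * F b dvd L (a + b) ^ m - negpow (b * int m) * L (a - b) ^ m"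
proof -
  have "L (a + b) ^ m - negpow (b * int m) * L (a - b) ^ m = L (a + b) ^ m - (negpow b * L (a - b)) ^ m"
    by (simp add: negpow_mult power_mult_distrib)
  then show ?thesis using diff_dvd_pow[of "L (a+b)" "negpow b * L (a - b)" m] key[of a b] by simp
qed

theorem mainTheorem12:
  fixes r k s :: int and n :: nat
  assumes "k + r \<noteq> 0" and "k + s \<noteq> 0"
  shows "5 * F (k + r) * F (k + s) dvd
           L (2 * k + r + s) ^ (n + 1) - negpow ((k + s) * int (n + 1)) * L (r - s) ^ (n + 1)
       \<and> 5 * F (k + r) ^ 2 dvd
           L (2 * (k + r)) ^ (n + 1) - negpow ((k + r) * int (n + 1)) * 2 ^ (n + 1)"
proof
  show "5 * F (k + r) * F (k + s) dvd
           L (2 * k + r + s) ^ (n + 1) - negpow ((k + s) * int (n + 1)) * L (r - s) ^ (n + 1)"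
    using main_dvd[of "k+r" "k+s" "n+1"] by (simp add: algebra_simps)
  have "L 0 = 2" by (simp add: L_def)
  then show "5 * F (k + r) ^ 2 dvd
           L (2 * (k + r)) ^ (n + 1) - negpow ((k + r) * int (n + 1)) * 2 ^ (n + 1)"
    using main_dvd[of "k+r" "k+r" "n+1"] by (simp add: algebra_simps power2_eq_square)
qed

end
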